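(* Let $P$ be a monotone irreducible positive recurrent stochastic kernel on $\mathbb{N}=\{1,2,\dots\}$ with stationary distribution $\pi$. Let $\overleftarrow{P}(x,y)=\pi(x)^{-1}P(y,x)\pi(y)$, $x,y\in\mathbb{N}$, be the time-reversed kernel, $\overleftarrow{X}=(\overleftarrow{X}_n)_{n\ge0}$ the Markov chain with kernel $\overleftarrow{P}$, and for $N\ge1$ let $\overleftarrow{\tau}_{(N)}=\inf\{n\ge0:\overleftarrow{X}_n\ge N\}$. Then $$\forall\, x,y\in\mathbb{N}:\quad \lim_{n,N\to\infty}\mathbb{P}_x\big(\overleftarrow{X}_n=y\,\big|\,\overleftarrow{\tau}_{(N)}>n\big)=\pi(y),$$ the limit being joint in $n$ and $N$.
   Context: A stochastic kernel $P$ on $\mathbb{N}$ is monotone if for every $y$ the map $x\mapsto\sum_{z\le y}P(x,z)$ is decreasing in $x$. $\pi$ is the (strictly positive) stationary probability of $P$. $\mathbb{P}_x$ denotes the law of the chain started at $x$. *)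

theory Defs
  imports "HOL-Probability.Probability"
begin

text \<open>State space is {1,2,...} (the naturals without 0). A Markov kernel is
  given as a map from states to probability mass functions; its value at 0 is irrelevant.\<close>

definition stoch_kernel :: "(nat \<Rightarrow> nat pmf) \<Rightarrow> bool" where
  "stoch_kernel K \<longleftrightarrow> (\<forall>x\<ge>1. set_pmf (K x) \<subseteq> {1..})"

primrec chain_path :: "(nat \<Rightarrow> nat pmf) \<Rightarrow> nat \<Rightarrow> nat \<Rightarrow> nat list pmf" where
  "chain_path K x 0 = return_pmf [x]"
| "chain_path K x (Suc n) =
     bind_pmf (chain_path K x n) (\<lambda>xs. map_pmf (\<lambda>y. xs @ [y]) (K (last xs)))"

definition monotone_kernel :: "(nat \<Rightarrow> nat pmf) \<Rightarrow> bool" where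
  "monotone_kernel K \<longleftrightarrow>
     (\<forall>y x x'. 1 \<le> x \<longrightarrow> x \<le> x' \<longrightarrow>
        measure_pmf.prob (K x') {..y} \<le> measure_pmf.prob (K x) {..y})"

definition irreducible_kernel :: "(nat \<Rightarrow> nat pmf) \<Rightarrow> bool" where
  "irreducible_kernel K \<longleftrightarrow>
     (\<forall>x\<ge>1. \<forall>y\<ge>1. \<exists>n. measure_pmf.prob (chain_path K x n) {xs. xs ! n = y} > 0)"

text \<open>Positive recurrence: E_x[T_x^+] = sum_n P_x(T_x^+ > n) is finite for every state x,
  where T_x^+ is the first return time to x.\<close>
definition positive_recurrent :: "(nat \<Rightarrow> nat pmf) \<Rightarrow> bool" where
  "positive_recurrent K \<longleftrightarrow>
     (\<forall>x\<ge>1. summable (\<lambda>n. measure_pmf.prob (chain_path K x n)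
                                {xs. \<forall>i\<in>{1..n}. xs ! i \<noteq> x}))"

definition stationary_prob :: "(nat \<Rightarrow> nat pmf) \<Rightarrow> (nat \<Rightarrow> real) \<Rightarrow> bool" where
  "stationary_prob K \<pi> \<longleftrightarrow>
     (\<forall>x\<ge>1. \<pi> x > 0) \<and> (\<pi> has_sum 1) {1..} \<and>
     (\<forall>y\<ge>1. ((\<lambda>x. \<pi> x * pmf (K x) y) has_sum \<pi> y) {1..})"

text \<open>P_x(X_n = y | tau_(N) > n), with tau_(N) = inf{n. X_n >= N}.\<close>
definition cond_prob_not_exited ::
  "(nat \<Rightarrow> nat pmf) \<Rightarrow> nat \<Rightarrow> nat \<Rightarrow> nat \<Rightarrow> nat \<Rightarrow> real" where
  "cond_prob_not_exited K x n N y =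
     measure_pmf.prob (chain_path K x n) {xs. xs ! n = y \<and> (\<forall>i\<le>n. xs ! i < N)} /
     measure_pmf.prob (chain_path K x n) {xs. \<forall>i\<le>n. xs ! i < N}"

end

theory Submission
  imports Defs
begin

lemma measure_bind_pmf_real:
  "measure_pmf.prob (bind_pmf M N) X = (\<integral>x. measure_pmf.prob (N x) X \<partial>measure_pmf M)"
proof -
  have "ennreal (measure_pmf.prob (bind_pmf M N) X) = emeasure (bind_pmf M N) X"
    by (simp add: measure_pmf.emeasure_eq_measure)
  also have "\<dots> = (\<integral>\<^sup>+x. emeasure (N x) X \<partial>M)" by simp
  also have "\<dots> = (\<integral>\<^sup>+x. ennreal (measure_pmf.prob (N x) X) \<partial>M)"
    by (simp add: measure_pmf.emeasure_eq_measure)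
  also have "\<dots> = ennreal (\<integral>x. measure_pmf.prob (N x) X \<partial>measure_pmf M)"
    by (rule nn_integral_eq_integral)
       (auto intro!: measure_pmf.integrable_const_bound[where B=1])
  finally show ?thesis
    by (subst (asm) ennreal_inj) (auto intro!: integral_nonneg_AE)
qed

lemma chain_path_nonempty: "xs \<in> set_pmf (chain_path K x n) \<Longrightarrow> xs \<noteq> [] \<and> length xs = Suc n \<and> hd xs = x"
  by (induction n arbitrary: xs) auto

lemma chain_path_Suc':
  "chain_path K x (Suc n) = bind_pmf (K x) (\<lambda>u. map_pmf ((#) x) (chain_path K u n))"
proof (induction n)
  case 0
  then show ?case by (simp add: bind_return_pmf map_pmf_def)
next
  case (Suc n)
  have "chain_path K x (Suc (Suc n)) =
     bind_pmf (chain_path K x (Suc n)) (\<lambda>xs. map_pmf (\<lambda>y. xs @ [y]) (K (last xs)))" by simp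
  also have "\<dots> = bind_pmf (K x) (\<lambda>u. bind_pmf (map_pmf ((#) x) (chain_path K u n))
                  (\<lambda>xs. map_pmf (\<lambda>y. xs @ [y]) (K (last xs))))"
    by (simp only: Suc bind_assoc_pmf)
  also have "\<dots> = bind_pmf (K x) (\<lambda>u. map_pmf ((#) x) (chain_path K u (Suc n)))"
  proof (rule bind_pmf_cong[OF refl])
    fix u
    have "bind_pmf (map_pmf ((#) x) (chain_path K u n)) (\<lambda>xs. map_pmf (\<lambda>y. xs @ [y]) (K (last xs)))
        = bind_pmf (chain_path K u n) (\<lambda>ys. map_pmf (\<lambda>y. (x # ys) @ [y]) (K (last (x # ys))))"
      by (simp add: bind_map_pmf)
    also have "\<dots> = bind_pmf (chain_path K u n) (\<lambda>ys. map_pmf ((#) x) (map_pmf (\<lambda>y. ys @ [y]) (K (last ys))))"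
      by (rule bind_pmf_cong[OF refl]) (auto simp: pmf.map_comp o_def dest: chain_path_nonempty)
    also have "\<dots> = map_pmf ((#) x) (chain_path K u (Suc n))"
      by (simp add: map_bind_pmf)
    finally show "bind_pmf (map_pmf ((#) x) (chain_path K u n)) (\<lambda>xs. map_pmf (\<lambda>y. xs @ [y]) (K (last xs))) = map_pmf ((#) x) (chain_path K u (Suc n))" .
  qed
  finally show ?case .
qed

lemma integrable_pmf_bounded[intro]:
  fixes f :: "'a \<Rightarrow> real"
  shows "(\<And>x. \<bar>f x\<bar> \<le> B) \<Longrightarrow> integrable (measure_pmf p) f"
  by (rule measure_pmf.integrable_const_bound[where B=B]) auto

primrec V :: "(nat \<Rightarrow> nat pmf) \<Rightarrow> nat set \<Rightarrow> (nat \<Rightarrow> real) \<Rightarrow> nat \<Rightarrow> nat \<Rightarrow> real" where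
  "V K S f 0 z = (if z \<in> S then f z else 0)"
| "V K S f (Suc n) z = (if z \<in> S then (\<integral>u. V K S f n u \<partial>measure_pmf (K z)) else 0)"

lemma V_bounds:
  assumes "\<And>x. 0 \<le> f x" "\<And>x. f x \<le> 1"
  shows "0 \<le> V K S f n z \<and> V K S f n z \<le> 1"
proof (induction n arbitrary: z)
  case 0 then show ?case using assms by simp
next
  case (Suc n)
  have i: "integrable (measure_pmf (K z)) (V K S f n)"
    by (rule integrable_pmf_bounded[where B=1]) (use Suc in auto)
  have "0 \<le> (\<integral>u. V K S f n u \<partial>measure_pmf (K z))"
    by (rule integral_nonneg_AE) (use Suc in auto)
  moreover have "(\<integral>u. V K S f n u \<partial>measure_pmf (K z)) \<le> (\<integral>u. 1 \<partial>measure_pmf (K z))"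
    by (rule integral_mono) (use Suc i in auto)
  ultimately show ?case by simp
qed

lemma all_le_Suc_split: "(\<forall>i\<le>Suc n. P i) \<longleftrightarrow> P 0 \<and> (\<forall>i\<le>n. P (Suc i))"
  by (metis Suc_le_mono le0 not0_implies_Suc)

lemma chain_path_V:
  "measure_pmf.prob (chain_path K z n) {xs. (\<forall>i\<le>n. xs!i \<in> S) \<and> xs!n \<in> B} = V K S (indicator B) n z"
proof (induction n arbitrary: z)
  case 0
  then show ?case by (auto simp: indicator_def)
next
  case (Suc n)
  have pre: "((#) z) -` {xs. (\<forall>i\<le>Suc n. xs!i \<in> S) \<and> xs!(Suc n) \<in> B} =
     (if z \<in> S then {ys. (\<forall>i\<le>n. ys!i \<in> S) \<and> ys!n \<in> B} else {})"
    by (auto simp: all_le_Suc_split)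
  show ?case
    by (simp only: chain_path_Suc' measure_bind_pmf_real measure_map_pmf pre Suc)
       (simp add: Suc[symmetric])
qed


primrec q :: "(nat \<Rightarrow> nat pmf) \<Rightarrow> nat set \<Rightarrow> nat \<Rightarrow> nat \<Rightarrow> nat \<Rightarrow> real" where
  "q K S 0 z w = (if z = w \<and> z \<in> S then 1 else 0)"
| "q K S (Suc n) z w = (if z \<in> S then (\<Sum>u\<in>S. pmf (K z) u * q K S n u w) else 0)"

lemma q_nonneg: "0 \<le> q K S n z w"
  by (induction n arbitrary: z) (auto intro!: sum_nonneg)

lemma q_out: "z \<notin> S \<or> w \<notin> S \<Longrightarrow> q K S n z w = 0"
  by (induction n arbitrary: z) auto

lemma q_CK:
  assumes "finite S"
  shows "q K S (n + m) z w = (\<Sum>u\<in>S. q K S n z u * q K S m u w)"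
proof (induction n arbitrary: z)
  case 0
  show ?case
  proof (cases "z \<in> S")
    case True
    then have "(\<Sum>u\<in>S. q K S 0 z u * q K S m u w) = (\<Sum>u\<in>{z}. q K S 0 z u * q K S m u w)"
      by (intro sum.mono_neutral_right) (auto simp: assms)
    then show ?thesis using True by simp
  next
    case False
    then show ?thesis by (simp add: q_out)
  qed
next
  case (Suc n)
  have "q K S (Suc n + m) z w = (if z \<in> S then (\<Sum>v\<in>S. pmf (K z) v * (\<Sum>u\<in>S. q K S n v u * q K S m u w)) else 0)"
    by (simp add: Suc)
  also have "\<dots> = (\<Sum>u\<in>S. q K S (Suc n) z u * q K S m u w)"
    by (auto simp: sum_distrib_left sum_distrib_right mult.assoc intro: sum.swap)
  finally show ?case .
qed

lemma q_one: "finite S \<Longrightarrow> q K S 1 u w = (if u \<in> S \<and> w \<in> S then pmf (K u) w else 0)"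
proof -
  assume fin: "finite S"
  show ?thesis
  proof (cases "u \<in> S \<and> w \<in> S")
    case True
    have "(\<Sum>v\<in>S. pmf (K u) v * (if v = w \<and> v \<in> S then 1 else 0)) = (\<Sum>v\<in>S. if v = w then pmf (K u) v else 0)"
      by (intro sum.cong) auto
    also have "\<dots> = pmf (K u) w" using True fin by (simp add: sum.delta' )
    finally show ?thesis using True by simp
  next
    case False
    have "q K S 1 u w = 0" by (rule q_out) (use False in auto)
    then show ?thesis by (simp only: if_not_P[OF False])
  qed
qed

lemma q_Suc_last:
  assumes "finite S"
  shows "q K S (Suc n) z w = (if w \<in> S then (\<Sum>u\<in>S. q K S n z u * pmf (K u) w) else 0)"
proof -
  have "q K S (Suc n) z w = (\<Sum>u\<in>S. q K S n z u * q K S 1 u w)"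
    using q_CK[OF assms, of K n 1 z w] by simp
  also have "\<dots> = (if w \<in> S then (\<Sum>u\<in>S. q K S n z u * pmf (K u) w) else 0)"
    by (simp only: q_one[OF assms]) (auto simp: q_out intro!: sum.cong)
  finally show ?thesis .
qed

lemma V_out: "z \<notin> S \<Longrightarrow> V K S f n z = 0"
  by (cases n) auto

lemma V_q:
  assumes "finite S"
  shows "V K S f n z = (\<Sum>w\<in>S. q K S n z w * f w)"
proof (induction n arbitrary: z)
  case 0
  show ?case
  proof (cases "z \<in> S")
    case True
    have "(\<Sum>w\<in>S. q K S 0 z w * f w) = (\<Sum>w\<in>S. if w = z then f w else 0)"
      by (intro sum.cong) auto
    then show ?thesis using True assms by (simp add: sum.delta')
  qed (simp add: q_out)
next
  case (Suc n)
  show ?case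
  proof (cases "z \<in> S")
    case True
    have "(\<integral>u. V K S f n u \<partial>measure_pmf (K z)) = (\<Sum>u\<in>S. V K S f n u * pmf (K z) u)"
      apply (rule integral_measure_pmf_real) apply (simp add: assms) by (metis V_out)
    also have "\<dots> = (\<Sum>u\<in>S. pmf (K z) u * (\<Sum>w\<in>S. q K S n u w * f w))"
      by (simp add: Suc mult.commute)
    also have "\<dots> = (\<Sum>w\<in>S. q K S (Suc n) z w * f w)"
      using True by (auto simp: sum_distrib_left sum_distrib_right mult.assoc intro: sum.swap)
    finally show ?thesis using True by simp
  qed (simp add: q_out)
qed

lemma q_mono_S:
  assumes "S \<subseteq> S'" "finite S'"
  shows "q K S n z w \<le> q K S' n z w"
proof (induction n arbitrary: z)
  case 0 then show ?case using assms by auto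
next
  case (Suc n)
  show ?case
  proof (cases "z \<in> S")
    case True
    have "(\<Sum>u\<in>S. pmf (K z) u * q K S n u w) \<le> (\<Sum>u\<in>S. pmf (K z) u * q K S' n u w)"
      by (intro sum_mono mult_left_mono Suc) auto
    also have "\<dots> \<le> (\<Sum>u\<in>S'. pmf (K z) u * q K S' n u w)"
      by (intro sum_mono2 assms) (auto intro!: mult_nonneg_nonneg q_nonneg)
    finally show ?thesis using True assms by auto
  qed (use q_nonneg[of K S' "Suc n" z w] in simp)
qed

lemma q_drop0:
  assumes "finite S" and pres: "\<And>z. z \<ge> 1 \<Longrightarrow> set_pmf (K z) \<subseteq> {1..}" and "z \<ge> 1"
  shows "q K S n z w = q K (S - {0}) n z w"
  using assms(3)
proof (induction n arbitrary: z)
  case 0 then show ?case by auto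
next
  case (Suc n)
  have p0: "pmf (K z) 0 = 0" using pres[OF Suc.prems] by (auto simp: set_pmf_eq)
  have "(\<Sum>u\<in>S. pmf (K z) u * q K S n u w) = (\<Sum>u\<in>S - {0}. pmf (K z) u * q K S n u w)"
    by (intro sum.mono_neutral_right) (auto simp: assms p0)
  also have "\<dots> = (\<Sum>u\<in>S - {0}. pmf (K z) u * q K (S - {0}) n u w)"
    by (intro sum.cong refl) (simp add: Suc.IH)
  finally show ?case using Suc.prems by auto
qed


lemma abel_sum:
  fixes p f :: "nat \<Rightarrow> real"
  shows "(\<Sum>u\<in>{1..<N}. p u * f u) =
     (\<Sum>v\<in>{1..<N}. (f v - f (Suc v)) * (\<Sum>u\<in>{1..v}. p u)) + f N * (\<Sum>u\<in>{1..<N}. p u)"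
proof (induction N)
  case 0 then show ?case by simp
next
  case (Suc N)
  show ?case
  proof (cases "N = 0")
    case True then show ?thesis by simp
  next
    case False
    then have e: "{1..<Suc N} = insert N {1..<N}" by auto
    have e2: "{1..N} = insert N {1..<N}" using False by auto
    have h: "(\<Sum>u\<in>{Suc 0..N}. p u) = p N + (\<Sum>u\<in>{Suc 0..<N}. p u)" using e2 by simp
    have "(\<Sum>u\<in>{1..<Suc N}. p u * f u) = p N * f N + (\<Sum>u\<in>{1..<N}. p u * f u)"
      unfolding e by simp
    also have "\<dots> = p N * f N + (\<Sum>v\<in>{1..<N}. (f v - f (Suc v)) * (\<Sum>u\<in>{1..v}. p u)) + f N * (\<Sum>u\<in>{1..<N}. p u)"
      using Suc.IH by simp
    also have "\<dots> = (\<Sum>v\<in>{1..<Suc N}. (f v - f (Suc v)) * (\<Sum>u\<in>{1..v}. p u)) + f (Suc N) * (\<Sum>u\<in>{1..<Suc N}. p u)"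
      unfolding e by (simp add: algebra_simps h)
    finally show ?thesis .
  qed
qed

lemma sum_pmf_le_1: "finite A \<Longrightarrow> (\<Sum>u\<in>A. pmf p u) \<le> 1"
  by (metis measure_measure_pmf_finite measure_pmf.prob_le_1)

definition SN :: "nat \<Rightarrow> nat set" where "SN N = {1..<N}"

lemma finite_SN[simp]: "finite (SN N)" by (simp add: SN_def)

primrec th :: "(nat \<Rightarrow> nat pmf) \<Rightarrow> nat \<Rightarrow> nat \<Rightarrow> nat \<Rightarrow> real" where
  "th K N 0 z = (if z = 1 then 1 else 0)"
| "th K N (Suc n) z = (if z = 1 then 1 else if z \<in> SN N then (\<Sum>u\<in>SN N. pmf (K z) u * th K N n u) else 0)"

lemma th_bounds: "0 \<le> th K N n z \<and> th K N n z \<le> 1"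
proof (induction n arbitrary: z)
  case 0 then show ?case by simp
next
  case (Suc n)
  have "(\<Sum>u\<in>SN N. pmf (K z) u * th K N n u) \<le> (\<Sum>u\<in>SN N. pmf (K z) u)"
    by (intro sum_mono) (use Suc in \<open>auto intro: mult_left_le\<close>)
  also have "\<dots> \<le> 1" by (rule sum_pmf_le_1) simp
  finally show ?case using Suc by (auto intro!: sum_nonneg)
qed

definition G :: "(nat \<Rightarrow> nat pmf) \<Rightarrow> nat \<Rightarrow> nat \<Rightarrow> nat \<Rightarrow> nat \<Rightarrow> real" where
  "G K N n z w = (\<Sum>u\<in>{u\<in>SN N. u \<le> w}. q K (SN N) n z u)"

lemma G_nonneg: "0 \<le> G K N n z w"
  unfolding G_def by (auto intro!: sum_nonneg q_nonneg)

lemma G_out: "z \<notin> SN N \<Longrightarrow> G K N n z w = 0"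
  unfolding G_def by (auto simp: q_out)

lemma G_Suc: "z \<in> SN N \<Longrightarrow> G K N (Suc n) z w = (\<Sum>u\<in>SN N. pmf (K z) u * G K N n u w)"
  unfolding G_def by (auto simp: sum_distrib_left intro: sum.swap)

locale mk =
  fixes P Prev :: "nat \<Rightarrow> nat pmf" and \<pi> :: "nat \<Rightarrow> real"
  assumes stoch: "stoch_kernel P"
    and mono: "monotone_kernel P"
    and irr: "irreducible_kernel P"
    and posrec: "positive_recurrent P"
    and stat: "stationary_prob P \<pi>"
    and rev: "\<forall>x\<ge>1. \<forall>y\<ge>1. pmf (Prev x) y = \<pi> y * pmf (P y) x / \<pi> x"
begin

lemma P_supp: "z \<ge> 1 \<Longrightarrow> set_pmf (P z) \<subseteq> {1..}"
  using stoch unfolding stoch_kernel_def by auto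

lemma P0: "z \<ge> 1 \<Longrightarrow> pmf (P z) 0 = 0"
  using P_supp by (auto simp: set_pmf_eq)

lemma Pcdf: "z \<ge> 1 \<Longrightarrow> (\<Sum>u\<in>{1..v}. pmf (P z) u) = measure_pmf.prob (P z) {..v}"
proof -
  assume z: "z \<ge> 1"
  have "measure_pmf.prob (P z) {..v} = (\<Sum>u\<in>{..v}. pmf (P z) u)"
    by (simp add: measure_measure_pmf_finite)
  also have "(\<Sum>u\<in>{..v}. pmf (P z) u) = (\<Sum>u\<in>insert 0 {1..v}. pmf (P z) u)"
    by (intro sum.cong) auto
  also have "(\<Sum>u\<in>insert 0 {1..v}. pmf (P z) u) = (\<Sum>u\<in>{1..v}. pmf (P z) u)"
    by (simp add: P0[OF z])
  finally show ?thesis by simp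
qed

lemma cdf_mono: "1 \<le> z \<Longrightarrow> z \<le> z' \<Longrightarrow> (\<Sum>u\<in>{1..v}. pmf (P z') u) \<le> (\<Sum>u\<in>{1..v}. pmf (P z) u)"
proof -
  assume a: "1 \<le> z" "z \<le> z'"
  have "measure_pmf.prob (P z') {..v} \<le> measure_pmf.prob (P z) {..v}"
    using mono a unfolding monotone_kernel_def by blast
  then show ?thesis using Pcdf[of z v] Pcdf[of z' v] a by simp
qed

lemma G0: "G K N 0 z w = (if z \<in> SN N \<and> z \<le> w then 1 else 0)"
proof -
  have "G K N 0 z w = (\<Sum>u\<in>{u\<in>SN N. u \<le> w}. if u = z then 1 else 0)"
    unfolding G_def by (intro sum.cong) auto
  also have "\<dots> = (if z \<in> SN N \<and> z \<le> w then 1 else 0)"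
    by (simp add: sum.delta')
  finally show ?thesis .
qed

lemma G_mono: "1 \<le> z \<Longrightarrow> z \<le> z' \<Longrightarrow> G P N n z' w \<le> G P N n z w"
proof (induction n arbitrary: z z' w)
  case 0
  then show ?case by (auto simp: G0 SN_def)
next
  case (Suc n)
  show ?case
  proof (cases "z' \<in> SN N")
    case False then show ?thesis by (simp add: G_out G_nonneg)
  next
    case True
    then have zS: "z \<in> SN N" using Suc.prems by (auto simp: SN_def)
    define f where "f u = G P N n u w" for u
    have fN: "f N = 0" unfolding f_def by (rule G_out) (simp add: SN_def)
    have key: "\<And>y. y \<ge> 1 \<Longrightarrow> (\<Sum>u\<in>SN N. pmf (P y) u * f u) =
        (\<Sum>v\<in>{1..<N}. (f v - f (Suc v)) * (\<Sum>u\<in>{1..v}. pmf (P y) u))"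
      using abel_sum[of "pmf (P _)" f N] fN by (simp add: SN_def)
    have "G P N (Suc n) z' w = (\<Sum>v\<in>{1..<N}. (f v - f (Suc v)) * (\<Sum>u\<in>{1..v}. pmf (P z') u))"
      using G_Suc[OF True] key Suc.prems by (simp add: f_def)
    also have "\<dots> \<le> (\<Sum>v\<in>{1..<N}. (f v - f (Suc v)) * (\<Sum>u\<in>{1..v}. pmf (P z) u))"
    proof (rule sum_mono)
      fix v assume v: "v \<in> {1..<N}"
      have a: "0 \<le> f v - f (Suc v)" using Suc.IH[of v "Suc v" w] v by (simp add: f_def)
      have b: "(\<Sum>u\<in>{1..v}. pmf (P z') u) \<le> (\<Sum>u\<in>{1..v}. pmf (P z) u)"
        using cdf_mono Suc.prems by simp
      show "(f v - f (Suc v)) * (\<Sum>u\<in>{1..v}. pmf (P z') u) \<le> (f v - f (Suc v)) * (\<Sum>u\<in>{1..v}. pmf (P z) u)"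
        using mult_left_mono[OF b a] .
    qed
    also have "\<dots> = G P N (Suc n) z w"
      using G_Suc[OF zS] key Suc.prems by (simp add: f_def)
    finally show ?thesis .
  qed
qed

lemma G_dec_time1: "G P N (Suc n) 1 w \<le> G P N n 1 w"
proof (cases "1 \<in> SN N")
  case True
  have "G P N (Suc n) 1 w = (\<Sum>u\<in>SN N. pmf (P 1) u * G P N n u w)" by (rule G_Suc[OF True])
  also have "\<dots> \<le> (\<Sum>u\<in>SN N. pmf (P 1) u * G P N n 1 w)"
    by (intro sum_mono mult_left_mono G_mono) (auto simp: SN_def)
  also have "\<dots> = (\<Sum>u\<in>SN N. pmf (P 1) u) * G P N n 1 w" by (simp add: sum_distrib_right)
  also have "\<dots> \<le> 1 * G P N n 1 w"
    by (intro mult_right_mono sum_pmf_le_1 G_nonneg) simp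
  finally show ?thesis by simp
qed (simp add: G_out)

lemma G_dec_time: "m \<le> n \<Longrightarrow> G P N n 1 w \<le> G P N m 1 w"
proof (induction n rule: dec_induct)
  case base then show ?case by simp
next
  case (step k) then show ?case using G_dec_time1[of N k w] by linarith
qed

lemma G_lower: "th P N n z * G P N n 1 w \<le> G P N n z w"
proof (induction n arbitrary: z)
  case 0 then show ?case by (simp add: G_nonneg)
next
  case (Suc n)
  show ?case
  proof (cases "z = 1")
    case True then show ?thesis by simp
  next
    case z1: False
    show ?thesis
    proof (cases "z \<in> SN N")
      case False then show ?thesis using z1 by (simp add: G_out)
    next
      case True
      have "th P N (Suc n) z * G P N (Suc n) 1 w =
          (\<Sum>u\<in>SN N. pmf (P z) u * th P N n u) * G P N (Suc n) 1 w" using z1 True by simp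
      also have "\<dots> \<le> (\<Sum>u\<in>SN N. pmf (P z) u * th P N n u) * G P N n 1 w"
        by (intro mult_left_mono G_dec_time1 sum_nonneg mult_nonneg_nonneg) (auto simp: th_bounds)
      also have "\<dots> = (\<Sum>u\<in>SN N. pmf (P z) u * (th P N n u * G P N n 1 w))"
        by (simp add: sum_distrib_right mult.assoc)
      also have "\<dots> \<le> (\<Sum>u\<in>SN N. pmf (P z) u * G P N n u w)"
        by (intro sum_mono mult_left_mono Suc.IH) auto
      also have "\<dots> = G P N (Suc n) z w" by (rule G_Suc[OF True, symmetric])
      finally show ?thesis .
    qed
  qed
qed

end

lemma ratio_bound:
  fixes num den b e p :: real
  assumes "\<bar>num - b\<bar> \<le> e" "\<bar>den - b\<bar> \<le> e" "e \<le> b/2" "0 < b" "0 < p"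
  shows "\<bar>p * num / den - p\<bar> \<le> 4 * p * e / b"
proof -
  have den: "den \<ge> b/2" using assms by linarith
  then have dpos: "den > 0" using assms by linarith
  have "p * num / den - p = p * (num - den) / den" using dpos by (simp add: field_simps)
  then have "\<bar>p * num / den - p\<bar> = p * \<bar>num - den\<bar> / den" using dpos assms by (simp add: abs_mult)
  also have "\<dots> \<le> p * (2 * e) / den"
    using assms dpos by (intro divide_right_mono mult_left_mono) auto
  also have "\<dots> \<le> p * (2 * e) / (b/2)"
    using assms dpos den by (intro divide_left_mono mult_nonneg_nonneg) auto
  also have "\<dots> = 4 * p * e / b" by simp
  finally show ?thesis .
qed

lemma th_mono_n: "th K N n z \<le> th K N (Suc n) z"
proof (induction n arbitrary: z)
  case 0 then show ?case using th_bounds[of K N 1 z] by auto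
next
  case (Suc n)
  have "(\<Sum>u\<in>SN N. pmf (K z) u * th K N n u) \<le> (\<Sum>u\<in>SN N. pmf (K z) u * th K N (Suc n) u)"
    by (intro sum_mono mult_left_mono Suc.IH) auto
  then show ?case by (simp only: th.simps(2)) auto
qed

lemma th_mono_n': "n \<le> n' \<Longrightarrow> th K N n z \<le> th K N n' z"
proof (induction n' rule: dec_induct)
  case (step k) then show ?case using th_mono_n[of K N k z] by linarith
qed simp

lemma th_mono_N: "N \<le> N' \<Longrightarrow> th K N n z \<le> th K N' n z"
proof (induction n arbitrary: z)
  case 0 then show ?case by simp
next
  case (Suc n)
  have sub: "SN N \<subseteq> SN N'" using Suc.prems by (auto simp: SN_def)
  show ?case
  proof (cases "z = 1")
    case False
    show ?thesis
    proof (cases "z \<in> SN N")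
      case True
      have "(\<Sum>u\<in>SN N. pmf (K z) u * th K N n u) \<le> (\<Sum>u\<in>SN N. pmf (K z) u * th K N' n u)"
        by (intro sum_mono mult_left_mono Suc) auto
      also have "\<dots> \<le> (\<Sum>u\<in>SN N'. pmf (K z) u * th K N' n u)"
        by (intro sum_mono2) (auto simp: sub th_bounds)
      finally show ?thesis using True False sub by auto
    next
      case False
      then show ?thesis using \<open>z \<noteq> 1\<close> th_bounds[of K N' "Suc n" z] by simp
    qed
  qed simp
qed

lemma G_point: "x \<in> SN N \<Longrightarrow> G K N n z x = q K (SN N) n z x + G K N n z (x - 1)"
proof -
  assume x: "x \<in> SN N"
  have e: "{u\<in>SN N. u \<le> x} = insert x {u\<in>SN N. u \<le> x - 1}" using x unfolding SN_def by auto
  show ?thesis unfolding G_def e using x by (subst sum.insert) (auto simp: SN_def)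
qed

context mk begin

lemma pi_pos: "z \<ge> 1 \<Longrightarrow> \<pi> z > 0"
  using stat unfolding stationary_prob_def by auto

lemma pi_hs: "(\<pi> has_sum 1) {1..}"
  using stat unfolding stationary_prob_def by auto

lemma pi_nonneg: "z \<ge> 1 \<Longrightarrow> 0 \<le> \<pi> z"
  using pi_pos[of z] by simp

lemma pi_sum_le1: "finite F \<Longrightarrow> F \<subseteq> {1..} \<Longrightarrow> sum \<pi> F \<le> 1"
  by (rule finite_sum_le_has_sum[OF pi_hs]) (auto simp: pi_nonneg)

lemma pi_le1: "z \<ge> 1 \<Longrightarrow> \<pi> z \<le> 1"
  using pi_sum_le1[of "{z}"] by auto

lemma rev': "x \<ge> 1 \<Longrightarrow> u \<ge> 1 \<Longrightarrow> \<pi> x * pmf (Prev x) u = \<pi> u * pmf (P u) x"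
  using rev pi_pos[of x] by auto

lemma Prev_supp: assumes z: "z \<ge> 1" shows "set_pmf (Prev z) \<subseteq> {1..}"
proof -
  have h0: "((\<lambda>x. \<pi> x * pmf (P x) z) has_sum \<pi> z) {1..}"
    using stat z unfolding stationary_prob_def by auto
  have "((\<lambda>x. \<pi> x * pmf (P x) z / \<pi> z) has_sum (\<pi> z / \<pi> z)) {1..}"
    by (rule has_sum_divide_const[OF h0])
  then have h: "(pmf (Prev z) has_sum 1) {1..}"
    using pi_pos[OF z] rev z by (subst has_sum_cong[where g="\<lambda>x. \<pi> x * pmf (P x) z / \<pi> z"]) auto
  have "pmf (Prev z) 0 \<le> e" if e: "e > 0" for e
  proof -
    obtain F where F: "finite F" "F \<subseteq> {1..}" "dist (sum (pmf (Prev z)) F) 1 \<le> e"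
      using has_sum_finite_approximation[OF h e] by blast
    have "measure_pmf.prob (Prev z) (insert 0 F) = pmf (Prev z) 0 + sum (pmf (Prev z)) F"
      using F by (subst measure_measure_pmf_finite) (auto simp: sum.insert_if)
    moreover have "measure_pmf.prob (Prev z) (insert 0 F) \<le> 1" by simp
    ultimately show ?thesis using F(3) by (auto simp: dist_real_def)
  qed
  then have "pmf (Prev z) 0 \<le> 0"
    by (metis dense not_le)
  then have "pmf (Prev z) 0 = 0" by (simp add: antisym)
  then show ?thesis by (auto simp: set_pmf_eq) (metis Suc_leI neq0_conv)
qed

lemma q_rev:
  assumes S: "finite S" "S \<subseteq> {1..}" and x: "x \<ge> 1" and y: "y \<ge> 1"
  shows "\<pi> x * q Prev S n x y = \<pi> y * q P S n y x"
  using x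
proof (induction n arbitrary: x)
  case 0 then show ?case by auto
next
  case (Suc n)
  show ?case
  proof (cases "x \<in> S")
    case True
    have "\<pi> x * q Prev S (Suc n) x y = (\<Sum>u\<in>S. (\<pi> x * pmf (Prev x) u) * q Prev S n u y)"
      using True by (simp add: sum_distrib_left mult.assoc)
    also have "\<dots> = (\<Sum>u\<in>S. pmf (P u) x * (\<pi> u * q Prev S n u y))"
      using S Suc.prems by (intro sum.cong refl) (auto simp: rev')
    also have "\<dots> = (\<Sum>u\<in>S. pmf (P u) x * (\<pi> y * q P S n y u))"
      using S by (intro sum.cong refl) (auto simp: Suc.IH)
    also have "\<dots> = \<pi> y * q P S (Suc n) y x"
      using True S by (subst q_Suc_last[OF S(1)]) (simp add: sum_distrib_left mult_ac)
    finally show ?thesis .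
  next
    case False
    then show ?thesis by (simp add: q_out)
  qed
qed

lemma cond_formula:
  assumes x: "x \<in> SN N" and y: "y \<in> SN N"
  shows "cond_prob_not_exited Prev x n N y =
    \<pi> y * q P (SN N) n y x / (\<Sum>z\<in>SN N. \<pi> z * q P (SN N) n z x)"
proof -
  have x1: "x \<ge> 1" and y1: "y \<ge> 1" using x y by (auto simp: SN_def)
  have S0: "{..<N} - {0} = SN N" by (auto simp: SN_def)
  have dq: "q Prev {..<N} n x w = q Prev (SN N) n x w" for w
    using q_drop0[of "{..<N}" Prev x n w] Prev_supp x1 S0 by simp
  have num: "measure_pmf.prob (chain_path Prev x n) {xs. xs ! n = y \<and> (\<forall>i\<le>n. xs ! i < N)}
      = q Prev (SN N) n x y"
  proof -
    have e: "{xs. xs ! n = y \<and> (\<forall>i\<le>n. xs ! i < N)} = {xs. (\<forall>i\<le>n. xs!i \<in> {..<N}) \<and> xs!n \<in> {y}}" by auto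
    have "measure_pmf.prob (chain_path Prev x n) {xs. xs ! n = y \<and> (\<forall>i\<le>n. xs ! i < N)}
       = V Prev {..<N} (indicator {y}) n x" unfolding e by (rule chain_path_V)
    also have "\<dots> = (\<Sum>w\<in>{..<N}. q Prev {..<N} n x w * indicator {y} w)" by (simp add: V_q)
    also have "\<dots> = q Prev {..<N} n x y"
      using y by (simp add: indicator_def sum.delta' SN_def)
    finally show ?thesis using dq by simp
  qed
  have den: "measure_pmf.prob (chain_path Prev x n) {xs. \<forall>i\<le>n. xs ! i < N}
      = (\<Sum>w\<in>SN N. q Prev (SN N) n x w)"
  proof -
    have e: "{xs. \<forall>i\<le>n. xs ! i < N} = {xs. (\<forall>i\<le>n. xs!i \<in> {..<N}) \<and> xs!n \<in> UNIV}" by auto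
    have "measure_pmf.prob (chain_path Prev x n) {xs. \<forall>i\<le>n. xs ! i < N}
       = V Prev {..<N} (indicator UNIV) n x" unfolding e by (rule chain_path_V)
    also have "\<dots> = (\<Sum>w\<in>{..<N}. q Prev (SN N) n x w)" by (simp add: V_q dq)
    also have "\<dots> = (\<Sum>w\<in>SN N. q Prev (SN N) n x w)"
      by (intro sum.mono_neutral_right) (auto simp: SN_def q_out)
    finally show ?thesis .
  qed
  have r: "q Prev (SN N) n x w = \<pi> w * q P (SN N) n w x / \<pi> x" if "w \<in> SN N" for w
  proof -
    have "\<pi> x * q Prev (SN N) n x w = \<pi> w * q P (SN N) n w x"
      by (rule q_rev) (use x1 that in \<open>auto simp: SN_def\<close>)
    then show ?thesis using pi_pos[OF x1] by (simp add: field_simps)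
  qed
  have "cond_prob_not_exited Prev x n N y = q Prev (SN N) n x y / (\<Sum>w\<in>SN N. q Prev (SN N) n x w)"
    unfolding cond_prob_not_exited_def num den ..
  also have "\<dots> = (\<pi> y * q P (SN N) n y x / \<pi> x) / (\<Sum>w\<in>SN N. \<pi> w * q P (SN N) n w x / \<pi> x)"
    using y by (simp add: r)
  also have "\<dots> = \<pi> y * q P (SN N) n y x / (\<Sum>z\<in>SN N. \<pi> z * q P (SN N) n z x)"
    using pi_pos[OF x1] by (simp add: sum_divide_distrib[symmetric])
  finally show ?thesis .
qed

end

context mk begin

definition EE :: "nat \<Rightarrow> nat \<Rightarrow> real" where
  "EE n N = 1 - (\<Sum>z\<in>SN N. \<pi> z * th P N n z)"

lemma sum_pi_SN_le1: "(\<Sum>z\<in>SN N. \<pi> z) \<le> 1"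
  by (rule pi_sum_le1) (auto simp: SN_def)

lemma EE_nonneg: "0 \<le> EE n N"
proof -
  have "(\<Sum>z\<in>SN N. \<pi> z * th P N n z) \<le> (\<Sum>z\<in>SN N. \<pi> z)"
    by (intro sum_mono mult_left_le) (auto simp: th_bounds pi_nonneg SN_def)
  then show ?thesis using sum_pi_SN_le1[of N] by (simp add: EE_def)
qed

lemma EE_term: assumes "y \<in> SN N" shows "\<pi> y * (1 - th P N n y) \<le> EE n N"
proof -
  have "\<pi> y * (1 - th P N n y) \<le> (\<Sum>z\<in>SN N. \<pi> z * (1 - th P N n z))"
    by (rule member_le_sum[where f="\<lambda>z. \<pi> z * (1 - th P N n z)"])
       (use assms in \<open>auto simp: th_bounds pi_nonneg SN_def\<close>)
  also have "\<dots> = (\<Sum>z\<in>SN N. \<pi> z) - (\<Sum>z\<in>SN N. \<pi> z * th P N n z)"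
    by (simp add: algebra_simps sum_subtractf)
  also have "\<dots> \<le> EE n N" using sum_pi_SN_le1[of N] by (simp add: EE_def)
  finally show ?thesis .
qed

lemma EE_mono: assumes "n \<le> n'" "N \<le> N'" shows "EE n' N' \<le> EE n N"
proof -
  have "(\<Sum>z\<in>SN N. \<pi> z * th P N n z) \<le> (\<Sum>z\<in>SN N. \<pi> z * th P N' n' z)"
  proof (intro sum_mono mult_left_mono)
    fix z assume "z \<in> SN N"
    then show "0 \<le> \<pi> z" by (auto simp: SN_def pi_nonneg)
    show "th P N n z \<le> th P N' n' z"
      using th_mono_n'[OF assms(1), of P N z] th_mono_N[OF assms(2), of P n' z] by linarith
  qed
  also have "\<dots> \<le> (\<Sum>z\<in>SN N'. \<pi> z * th P N' n' z)"
    using assms by (intro sum_mono2) (auto simp: SN_def pi_nonneg th_bounds)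
  finally show ?thesis by (simp add: EE_def)
qed

lemma D_bound:
  assumes x: "x \<in> SN N" and z: "z \<in> SN N"
  shows "\<bar>q P (SN N) n z x - q P (SN N) n 1 x\<bar> \<le> (1 - th P N n z) * G P N n 1 x"
proof -
  have z1: "1 \<le> z" using z by (auto simp: SN_def)
  define t where "t = th P N n z"
  define A where "A = G P N n 1 x"
  define A' where "A' = G P N n 1 (x - 1)"
  define b where "b = q P (SN N) n 1 x"
  define D where "D = q P (SN N) n z x"
  have 1: "G P N n z x = D + G P N n z (x - 1)" unfolding D_def by (rule G_point[OF x])
  have 2: "A = b + A'" unfolding A_def A'_def b_def by (rule G_point[OF x])
  have 3: "t * A \<le> G P N n z x" unfolding t_def A_def by (rule G_lower)
  have 4: "t * A' \<le> G P N n z (x - 1)" unfolding t_def A'_def by (rule G_lower)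
  have 5: "G P N n z x \<le> A" unfolding A_def by (rule G_mono[OF _ z1]) simp
  have 6: "G P N n z (x - 1) \<le> A'" unfolding A'_def by (rule G_mono[OF _ z1]) simp
  have tb: "0 \<le> t" "t \<le> 1" unfolding t_def using th_bounds by auto
  have bnn: "0 \<le> b" unfolding b_def by (rule q_nonneg)
  have 7: "t * A = t * b + t * A'" using 2 by (simp add: algebra_simps)
  have 8: "t * b \<le> b" using tb bnn by (simp add: mult_left_le_one_le)
  have "\<bar>D - b\<bar> \<le> A - t * A" using 1 2 3 4 5 6 7 8 by linarith
  then show ?thesis by (simp add: D_def b_def t_def A_def algebra_simps)
qed

lemma main_est:
  assumes x: "x \<in> SN N" and y: "y \<in> SN N" and c: "0 < c" "c \<le> 1"
    and KC: "c * G P N n 1 x \<le> q P (SN N) n 1 x" and bpos: "0 < q P (SN N) n 1 x"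
    and E: "EE n N \<le> c * \<pi> y / 2"
  shows "\<bar>cond_prob_not_exited Prev x n N y - \<pi> y\<bar> \<le> 4 * EE n N / c"
proof -
  define D where "D z = q P (SN N) n z x" for z
  define b where "b = D 1"
  define g where "g = G P N n 1 x"
  define E' where "E' = EE n N"
  have y1: "y \<ge> 1" using y by (auto simp: SN_def)
  have py: "0 < \<pi> y" "\<pi> y \<le> 1" using pi_pos[OF y1] pi_le1[OF y1] by auto
  have bpos': "0 < b" using bpos by (simp add: b_def D_def)
  have bg: "b \<le> g" using G_point[OF x, of P n 1] G_nonneg[of P N n 1 "x - 1"]
    by (simp add: b_def g_def D_def)
  have gc: "c * g \<le> b" using KC by (simp add: b_def g_def D_def)
  have g0: "0 \<le> g" using bg bpos' by simp
  have E0: "0 \<le> E'" using EE_nonneg by (simp add: E'_def)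
  have Dz: "\<bar>D z - b\<bar> \<le> (1 - th P N n z) * g" if "z \<in> SN N" for z
    using D_bound[OF x that] by (simp add: D_def b_def g_def)
  have sumb: "\<bar>(\<Sum>z\<in>SN N. \<pi> z * D z) - b\<bar> \<le> g * E'"
  proof -
    have "(\<Sum>z\<in>SN N. \<pi> z * D z) - b = (\<Sum>z\<in>SN N. \<pi> z * (D z - b)) - (1 - (\<Sum>z\<in>SN N. \<pi> z)) * b"
      by (simp add: algebra_simps sum_subtractf sum_distrib_right sum_distrib_left)
    moreover have "\<bar>\<Sum>z\<in>SN N. \<pi> z * (D z - b)\<bar> \<le> (\<Sum>z\<in>SN N. \<pi> z * ((1 - th P N n z) * g))"
    proof -
      have "\<bar>\<Sum>z\<in>SN N. \<pi> z * (D z - b)\<bar> \<le> (\<Sum>z\<in>SN N. \<bar>\<pi> z * (D z - b)\<bar>)" by (rule sum_abs)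
      also have "\<dots> \<le> (\<Sum>z\<in>SN N. \<pi> z * ((1 - th P N n z) * g))"
      proof (rule sum_mono)
        fix z assume z: "z \<in> SN N"
        then have "0 \<le> \<pi> z" by (auto simp: SN_def pi_nonneg)
        then show "\<bar>\<pi> z * (D z - b)\<bar> \<le> \<pi> z * ((1 - th P N n z) * g)"
          using Dz[OF z] by (simp add: abs_mult mult_left_mono)
      qed
      finally show ?thesis .
    qed
    moreover have "(\<Sum>z\<in>SN N. \<pi> z * ((1 - th P N n z) * g)) = g * ((\<Sum>z\<in>SN N. \<pi> z) - (\<Sum>z\<in>SN N. \<pi> z * th P N n z))"
      by (simp add: algebra_simps sum_subtractf sum_distrib_left sum_distrib_right)
    moreover have "(1 - (\<Sum>z\<in>SN N. \<pi> z)) * b \<le> (1 - (\<Sum>z\<in>SN N. \<pi> z)) * g"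
      using sum_pi_SN_le1[of N] bg by (intro mult_left_mono) auto
    moreover have "0 \<le> (1 - (\<Sum>z\<in>SN N. \<pi> z)) * b"
      using sum_pi_SN_le1[of N] bpos' by simp
    moreover have "g * E' = g * ((\<Sum>z\<in>SN N. \<pi> z) - (\<Sum>z\<in>SN N. \<pi> z * th P N n z)) + (1 - (\<Sum>z\<in>SN N. \<pi> z)) * g"
      by (simp add: E'_def EE_def algebra_simps)
    ultimately show ?thesis by linarith
  qed
  define e where "e = g * E' / \<pi> y"
  have ye: "\<bar>D y - b\<bar> \<le> e"
  proof -
    have "\<bar>D y - b\<bar> \<le> (1 - th P N n y) * g" by (rule Dz[OF y])
    also have "\<dots> = g * (\<pi> y * (1 - th P N n y)) / \<pi> y" using py by simp
    also have "\<dots> \<le> g * E' / \<pi> y"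
      using EE_term[OF y, of n] g0 py by (intro divide_right_mono mult_left_mono) (auto simp: E'_def)
    finally show ?thesis by (simp add: e_def)
  qed
  have de: "\<bar>(\<Sum>z\<in>SN N. \<pi> z * D z) - b\<bar> \<le> e"
  proof -
    have "g * E' * \<pi> y \<le> g * E'" using py g0 E0
      by (simp add: mult_right_le_one_le mult_nonneg_nonneg)
    then have "g * E' \<le> g * E' / \<pi> y" using py by (simp add: le_divide_eq)
    then show ?thesis using sumb by (simp add: e_def)
  qed
  have eb: "e \<le> b / 2"
  proof -
    have "e \<le> g * (c * \<pi> y / 2) / \<pi> y"
      unfolding e_def using E g0 py by (intro divide_right_mono mult_left_mono) (auto simp: E'_def)
    also have "\<dots> = c * g / 2" using py by simp
    finally show ?thesis using gc by simp
  qed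
  have "\<bar>\<pi> y * D y / (\<Sum>z\<in>SN N. \<pi> z * D z) - \<pi> y\<bar> \<le> 4 * \<pi> y * e / b"
    by (rule ratio_bound[OF ye de eb bpos' py(1)])
  also have "4 * \<pi> y * e / b = 4 * E' * (g / b)" using py by (simp add: e_def)
  also have "\<dots> \<le> 4 * E' * (1 / c)"
    using E0 gc c bpos' by (intro mult_left_mono) (auto simp: divide_simps mult.commute)
  finally show ?thesis using cond_formula[OF x y, of n] by (simp add: D_def E'_def)
qed

end

lemma integral_pos_ex:
  fixes f :: "'a \<Rightarrow> real"
  assumes "(\<integral>u. f u \<partial>measure_pmf p) \<noteq> 0"
  shows "\<exists>u\<in>set_pmf p. f u \<noteq> 0"
proof (rule ccontr)
  assume "\<not> ?thesis"
  then have "(\<integral>u. f u \<partial>measure_pmf p) = (\<integral>u. 0 \<partial>measure_pmf p)"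
    by (intro integral_cong_AE) (auto simp: AE_measure_pmf_iff)
  then show False using assms by simp
qed

lemma sum_le_integral_pmf:
  fixes f :: "'a \<Rightarrow> real"
  assumes "finite A" "\<And>u. 0 \<le> f u" "\<And>u. f u \<le> B"
  shows "(\<Sum>u\<in>A. pmf p u * f u) \<le> (\<integral>u. f u \<partial>measure_pmf p)"
proof -
  have "(\<Sum>u\<in>A. pmf p u * f u) = (\<integral>u. f u * indicator A u \<partial>measure_pmf p)"
    by (subst integral_measure_pmf_real[OF assms(1)]) (auto simp: indicator_def mult.commute intro!: sum.cong)
  also have "\<dots> \<le> (\<integral>u. f u \<partial>measure_pmf p)"
  proof (rule integral_mono)
    show "integrable (measure_pmf p) (\<lambda>u. f u * indicator A u)"
      by (rule integrable_pmf_bounded[where B=B]) (use assms order_trans[OF assms(2) assms(3)] in \<open>auto simp: indicator_def\<close>)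
    show "integrable (measure_pmf p) f"
      by (rule integrable_pmf_bounded[where B=B]) (use assms in \<open>auto simp: abs_le_iff\<close>)
  qed (use assms in \<open>auto simp: indicator_def\<close>)
  finally show ?thesis .
qed

lemma sum_single_bound:
  fixes f :: "'a \<Rightarrow> real"
  assumes "finite S" "\<And>u. 0 \<le> f u" "\<And>u. f u \<le> 1"
  shows "(\<Sum>u\<in>S. pmf p u * f u) \<le> (if v \<in> S then pmf p v * f v else 0) + (1 - pmf p v)"
proof -
  have a: "(\<Sum>u\<in>S - {v}. pmf p u * f u) \<le> (\<Sum>u\<in>S - {v}. pmf p u)"
    using assms by (intro sum_mono) (auto intro: mult_right_le_one_le)
  have b: "(\<Sum>u\<in>S - {v}. pmf p u) + pmf p v \<le> 1"
  proof -
    have "(\<Sum>u\<in>insert v (S - {v}). pmf p u) \<le> 1" using assms(1) by (intro sum_pmf_le_1) simp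
    then show ?thesis using assms(1) by (subst (asm) sum.insert) auto
  qed
  show ?thesis
  proof (cases "v \<in> S")
    case True
    then have "(\<Sum>u\<in>S. pmf p u * f u) = pmf p v * f v + (\<Sum>u\<in>S - {v}. pmf p u * f u)"
      using assms(1) by (simp add: sum.remove)
    then show ?thesis using a b True by simp
  next
    case False
    then show ?thesis using a b by simp
  qed
qed

lemma q_single: "u \<in> S \<Longrightarrow> finite S \<Longrightarrow> pmf (K z) u * q K S n u w \<le> q K S (Suc n) z w \<or> z \<notin> S"
  by (auto intro!: member_le_sum[where f="\<lambda>u. pmf (K z) u * q K S n u w"] mult_nonneg_nonneg q_nonneg)

lemma q_comp: assumes "finite S" "u \<in> S" shows "q K S a z u * q K S b u w \<le> q K S (a + b) z w"
  unfolding q_CK[OF assms(1)]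
  by (rule member_le_sum[where f="\<lambda>u. q K S a z u * q K S b u w"]) (auto simp: assms q_nonneg)

lemma sq_Suc: "z \<in> S \<Longrightarrow> finite S \<Longrightarrow>
   (\<Sum>w\<in>S. q K S (Suc n) z w) = (\<Sum>u\<in>S. pmf (K z) u * (\<Sum>w\<in>S. q K S n u w))"
  by (auto simp: sum_distrib_left intro: sum.swap)

lemma sq_le1: "finite S \<Longrightarrow> (\<Sum>w\<in>S. q K S n z w) \<le> 1"
proof (induction n arbitrary: z)
  case 0
  show ?case
  proof (cases "z \<in> S")
    case True
    then have "(\<Sum>w\<in>S. q K S 0 z w) = (\<Sum>w\<in>S. if w = z then 1 else 0)" by (intro sum.cong) auto
    then show ?thesis using True 0 by (simp add: sum.delta')
  qed (simp add: q_out)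
next
  case (Suc n)
  show ?case
  proof (cases "z \<in> S")
    case True
    have "(\<Sum>u\<in>S. pmf (K z) u * (\<Sum>w\<in>S. q K S n u w)) \<le> (\<Sum>u\<in>S. pmf (K z) u)"
      by (intro sum_mono mult_right_le_one_le Suc) (auto intro: sum_nonneg q_nonneg)
    also have "\<dots> \<le> 1" using Suc.prems by (rule sum_pmf_le_1)
    finally show ?thesis using sq_Suc[OF True Suc.prems] by simp
  qed (simp add: q_out)
qed

lemma sq_le_V:
  assumes "finite S" "S \<subseteq> S'" "\<And>x. 0 \<le> f x" "\<And>x. f x \<le> 1"
  shows "(\<Sum>w\<in>S. q K S n z w * f w) \<le> V K S' f n z"
proof (induction n arbitrary: z)
  case 0
  show ?case
  proof (cases "z \<in> S")
    case True
    then have "(\<Sum>w\<in>S. q K S 0 z w * f w) = (\<Sum>w\<in>S. if w = z then f w else 0)" by (intro sum.cong) auto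
    then show ?thesis using True assms by (auto simp: sum.delta')
  next
    case False
    then show ?thesis using V_bounds[of f K S' 0 z] assms by (simp add: q_out)
  qed
next
  case (Suc n)
  show ?case
  proof (cases "z \<in> S")
    case True
    have "(\<Sum>w\<in>S. q K S (Suc n) z w * f w) = (\<Sum>u\<in>S. pmf (K z) u * (\<Sum>w\<in>S. q K S n u w * f w))"
      using True by (auto simp: sum_distrib_left sum_distrib_right mult.assoc intro: sum.swap)
    also have "\<dots> \<le> (\<Sum>u\<in>S. pmf (K z) u * V K S' f n u)"
      by (intro sum_mono mult_left_mono Suc) auto
    also have "\<dots> \<le> (\<integral>u. V K S' f n u \<partial>measure_pmf (K z))"
      by (rule sum_le_integral_pmf[where B=1]) (use assms V_bounds in auto)
    finally show ?thesis using True assms by auto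
  next
    case False
    then show ?thesis using V_bounds[of f K S' "Suc n" z] assms by (simp add: q_out)
  qed
qed


lemma sq0: "z \<in> S \<Longrightarrow> finite S \<Longrightarrow> (\<Sum>w\<in>S. q K S 0 z w) = 1"
proof -
  assume a: "z \<in> S" "finite S"
  then have "(\<Sum>w\<in>S. q K S 0 z w) = (\<Sum>w\<in>S. if w = z then 1 else 0)" by (intro sum.cong) auto
  then show ?thesis using a by (simp add: sum.delta')
qed

context mk begin

definition surv :: "nat \<Rightarrow> nat \<Rightarrow> nat \<Rightarrow> real" where
  "surv N n z = (\<Sum>w\<in>SN N. q P (SN N) n z w)"

lemma surv_nonneg: "0 \<le> surv N n z"
  unfolding surv_def by (auto intro!: sum_nonneg q_nonneg)

lemma surv_mono_N: "N \<le> N' \<Longrightarrow> surv N n z \<le> surv N' n z"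
proof -
  assume a: "N \<le> N'"
  have sub: "SN N \<subseteq> SN N'" using a by (auto simp: SN_def)
  have "(\<Sum>w\<in>SN N. q P (SN N) n z w) \<le> (\<Sum>w\<in>SN N. q P (SN N') n z w)"
    by (intro sum_mono q_mono_S sub) simp
  also have "\<dots> \<le> (\<Sum>w\<in>SN N'. q P (SN N') n z w)"
    by (intro sum_mono2 sub) (auto simp: q_nonneg)
  finally show ?thesis by (simp add: surv_def)
qed

lemma surv_Suc: "z \<in> SN N \<Longrightarrow> surv N (Suc n) z = (\<Sum>u\<in>SN N. pmf (P z) u * surv N n u)"
  unfolding surv_def by (rule sq_Suc) auto

lemma pmf_mass_large:
  assumes "e > 0"
  shows "\<exists>M. measure_pmf.prob p {..M::nat} > 1 - e"
proof -
  have "(\<lambda>M. measure_pmf.prob p {..M}) \<longlonglongrightarrow> measure_pmf.prob p (\<Union>M. {..M::nat})"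
    by (rule measure_pmf.finite_Lim_measure_incseq) (auto simp: incseq_def)
  moreover have "(\<Union>M. {..M::nat}) = UNIV" by auto
  ultimately have "(\<lambda>M. measure_pmf.prob p {..M}) \<longlonglongrightarrow> 1" by simp
  then have "eventually (\<lambda>M. measure_pmf.prob p {..M} > 1 - e) sequentially"
    by (rule order_tendstoD) (use assms in simp)
  then show ?thesis by (auto dest: eventually_happens)
qed

lemma surv_lim: "z \<ge> 1 \<Longrightarrow> e > 0 \<Longrightarrow> \<exists>N. 1 - e \<le> surv N n z"
proof (induction n arbitrary: z e)
  case 0
  have "z \<in> SN (Suc z)" using 0 by (auto simp: SN_def)
  then have "surv (Suc z) 0 z = 1" unfolding surv_def by (rule sq0) simp
  then show ?case using 0 by (intro exI[of _ "Suc z"]) simp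
next
  case (Suc n)
  show ?case
  proof (cases "e \<le> 1")
    case False
    then show ?thesis using surv_nonneg[of 0 "Suc n" z] by (intro exI[of _ 0]) linarith
  next
    case True
    define d where "d = e / 2"
    have d: "0 < d" "d \<le> 1/2" using Suc.prems True by (auto simp: d_def)
    obtain M where M: "measure_pmf.prob (P z) {..M} > 1 - d" using pmf_mass_large[OF d(1)] by blast
    have "\<forall>u\<in>{1..M}. \<exists>N. 1 - d \<le> surv N n u" using Suc.IH d by auto
    then obtain Nf where Nf: "\<forall>u\<in>{1..M}. 1 - d \<le> surv (Nf u) n u" by metis
    define N where "N = Max (insert (Suc (max z M)) (Nf ` {1..M}))"
    have NM: "Suc (max z M) \<le> N" unfolding N_def by (rule Max_ge) auto
    have NNf: "u \<in> {1..M} \<Longrightarrow> Nf u \<le> N" for u unfolding N_def by (rule Max_ge) auto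
    have zS: "z \<in> SN N" using NM Suc.prems by (auto simp: SN_def)
    have sub: "{1..M} \<subseteq> SN N" using NM by (auto simp: SN_def)
    have "surv N (Suc n) z = (\<Sum>u\<in>SN N. pmf (P z) u * surv N n u)" by (rule surv_Suc[OF zS])
    also have "\<dots> \<ge> (\<Sum>u\<in>{1..M}. pmf (P z) u * surv N n u)"
      by (intro sum_mono2 sub) (auto intro: mult_nonneg_nonneg surv_nonneg)
    also have "(\<Sum>u\<in>{1..M}. pmf (P z) u * surv N n u) \<ge> (\<Sum>u\<in>{1..M}. pmf (P z) u * (1 - d))"
    proof (intro sum_mono mult_left_mono)
      fix u assume u: "u \<in> {1..M}"
      have "1 - d \<le> surv (Nf u) n u" using Nf u by blast
      then show "1 - d \<le> surv N n u" using surv_mono_N[OF NNf[OF u], of n u] by linarith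
    qed auto
    also have "(\<Sum>u\<in>{1..M}. pmf (P z) u * (1 - d)) = (1 - d) * measure_pmf.prob (P z) {..M}"
    proof -
      have "(\<Sum>u\<in>{1..M}. pmf (P z) u * (1 - d)) = (\<Sum>u\<in>{1..M}. pmf (P z) u) * (1 - d)"
        by (rule sum_distrib_right[symmetric])
      then show ?thesis using Pcdf[OF Suc.prems(1), of M] by simp
    qed
    also have "(1 - d) * measure_pmf.prob (P z) {..M} \<ge> (1 - d) * (1 - d)"
      using M d by (intro mult_left_mono) auto
    finally have "(1 - d) * (1 - d) \<le> surv N (Suc n) z" .
    moreover have "1 - e \<le> (1 - d) * (1 - d)" using d by (simp add: d_def algebra_simps power2_eq_square)
    ultimately show ?thesis by (intro exI[of _ N]) linarith
  qed
qed

definition av :: "nat \<Rightarrow> nat \<Rightarrow> nat \<Rightarrow> real" where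
  "av N n z = (\<Sum>w\<in>SN N - {1}. q P (SN N - {1}) n z w)"

lemma av_nonneg: "0 \<le> av N n z"
  unfolding av_def by (auto intro!: sum_nonneg q_nonneg)

lemma surv_le1: "surv N n z \<le> 1"
  unfolding surv_def by (rule sq_le1) simp

lemma surv_le_th_av: "surv N n z \<le> th P N n z + av N n z"
proof (induction n arbitrary: z)
  case 0
  show ?case
  proof (cases "z \<in> SN N")
    case True
    have "surv N 0 z = 1" unfolding surv_def by (rule sq0[OF True]) simp
    moreover have "z \<noteq> 1 \<Longrightarrow> av N 0 z = 1" unfolding av_def by (rule sq0) (use True in auto)
    ultimately show ?thesis using av_nonneg[of N 0 z] by (cases "z = 1") auto
  next
    case False
    then have "surv N 0 z = 0" unfolding surv_def by (auto simp: q_out)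
    then show ?thesis using av_nonneg[of N 0 z] th_bounds[of P N 0 z] by linarith
  qed
next
  case (Suc n)
  show ?case
  proof (cases "z = 1")
    case True
    then show ?thesis using surv_le1[of N "Suc n" z] av_nonneg[of N "Suc n" z] by simp
  next
    case z1: False
    show ?thesis
    proof (cases "z \<in> SN N")
      case False
      then have "surv N (Suc n) z = 0" unfolding surv_def by (auto simp: q_out)
      then show ?thesis using av_nonneg[of N "Suc n" z] th_bounds[of P N "Suc n" z] by linarith
    next
      case True
      have av1: "av N n (Suc 0) = 0" unfolding av_def by (auto simp: q_out)
      have "av N (Suc n) z = (\<Sum>u\<in>SN N - {1}. pmf (P z) u * av N n u)"
        unfolding av_def by (rule sq_Suc) (use True z1 in auto)
      also have "\<dots> = (\<Sum>u\<in>SN N. pmf (P z) u * av N n u)"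
        by (intro sum.mono_neutral_left) (auto simp: av1)
      finally have a: "av N (Suc n) z = (\<Sum>u\<in>SN N. pmf (P z) u * av N n u)" .
      have "surv N (Suc n) z = (\<Sum>u\<in>SN N. pmf (P z) u * surv N n u)" by (rule surv_Suc[OF True])
      also have "\<dots> \<le> (\<Sum>u\<in>SN N. pmf (P z) u * (th P N n u + av N n u))"
        by (intro sum_mono mult_left_mono Suc.IH) auto
      also have "\<dots> = th P N (Suc n) z + av N (Suc n) z"
        using True z1 a by (simp add: algebra_simps sum.distrib)
      finally show ?thesis .
    qed
  qed
qed

lemma ball_Suc_split: "(\<forall>i\<in>{1..Suc m}. Q i) \<longleftrightarrow> (\<forall>j\<le>m. Q (Suc j))"
proof
  assume L: "\<forall>i\<in>{1..Suc m}. Q i"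
  show "\<forall>j\<le>m. Q (Suc j)"
  proof (intro allI impI)
    fix j assume "j \<le> m" then show "Q (Suc j)" using L by auto
  qed
next
  assume R: "\<forall>j\<le>m. Q (Suc j)"
  show "\<forall>i\<in>{1..Suc m}. Q i"
  proof
    fix i assume i: "i \<in> {1..Suc m}"
    then obtain j where "i = Suc j" by (cases i) auto
    then show "Q i" using R i by auto
  qed
qed

definition eta :: "nat \<Rightarrow> nat \<Rightarrow> real" where
  "eta n u = V P (-{1}) (indicator UNIV) n u"

lemma eta_bounds: "0 \<le> eta n u \<and> eta n u \<le> 1"
  unfolding eta_def by (rule V_bounds) auto

lemma av_le_eta: "av N n u \<le> eta n u"
proof -
  have "(\<Sum>w\<in>SN N - {1}. q P (SN N - {1}) n u w * indicator UNIV w) \<le> V P (-{1}) (indicator UNIV) n u"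
    by (rule sq_le_V) auto
  then show ?thesis by (simp add: av_def eta_def)
qed

lemma eta_tendsto: "(\<lambda>m. \<integral>u. eta m u \<partial>measure_pmf (P 1)) \<longlonglongrightarrow> 0"
proof -
  have s: "summable (\<lambda>n. measure_pmf.prob (chain_path P 1 n) {xs. \<forall>i\<in>{1..n}. xs ! i \<noteq> 1})"
    using posrec unfolding positive_recurrent_def by auto
  have "(\<lambda>n. measure_pmf.prob (chain_path P 1 n) {xs. \<forall>i\<in>{1..n}. xs ! i \<noteq> 1}) \<longlonglongrightarrow> 0"
    by (rule summable_LIMSEQ_zero[OF s])
  then have l: "(\<lambda>m. measure_pmf.prob (chain_path P 1 (Suc m)) {xs. \<forall>i\<in>{1..Suc m}. xs ! i \<noteq> 1}) \<longlonglongrightarrow> 0"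
    by (rule LIMSEQ_Suc)
  have "measure_pmf.prob (chain_path P 1 (Suc m)) {xs. \<forall>i\<in>{1..Suc m}. xs ! i \<noteq> 1}
      = (\<integral>u. eta m u \<partial>measure_pmf (P 1))" for m
  proof -
    have pre: "((#) 1) -` {xs. \<forall>i\<in>{1..Suc m}. xs ! i \<noteq> 1} = {ys. (\<forall>i\<le>m. ys!i \<in> -{1}) \<and> ys!m \<in> UNIV}"
      using ball_Suc_split[of m "\<lambda>i. (1 # _) ! i \<noteq> 1"] by auto
    show ?thesis
      by (simp only: chain_path_Suc' measure_bind_pmf_real measure_map_pmf pre chain_path_V eta_def)
  qed
  then show ?thesis using l by simp
qed

lemma R1: "e > 0 \<Longrightarrow> \<exists>n N. 1 - e \<le> (\<Sum>u\<in>SN N. pmf (P 1) u * th P N n u)"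
proof -
  assume e: "e > 0"
  have "eventually (\<lambda>m. (\<integral>u. eta m u \<partial>measure_pmf (P 1)) < e / 2) sequentially"
    by (rule order_tendstoD[OF eta_tendsto]) (use e in simp)
  then obtain m where m: "(\<integral>u. eta m u \<partial>measure_pmf (P 1)) < e / 2" by (auto dest: eventually_happens)
  obtain N0 where N0: "1 - e/2 \<le> surv N0 (Suc m) 1" using surv_lim[of 1 "e/2" "Suc m"] e by auto
  define N where "N = max N0 2"
  have N: "1 - e/2 \<le> surv N (Suc m) 1" using N0 surv_mono_N[of N0 N "Suc m" 1] by (simp add: N_def)
  have 1: "1 \<in> SN N" by (auto simp: N_def SN_def)
  have "surv N (Suc m) 1 = (\<Sum>u\<in>SN N. pmf (P 1) u * surv N m u)" by (rule surv_Suc[OF 1])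
  also have "\<dots> \<le> (\<Sum>u\<in>SN N. pmf (P 1) u * (th P N m u + eta m u))"
  proof (intro sum_mono mult_left_mono)
    fix u show "surv N m u \<le> th P N m u + eta m u" using surv_le_th_av[of N m u] av_le_eta[of N m u] by linarith
  qed simp
  also have "\<dots> = (\<Sum>u\<in>SN N. pmf (P 1) u * th P N m u) + (\<Sum>u\<in>SN N. pmf (P 1) u * eta m u)"
    by (simp add: algebra_simps sum.distrib)
  also have "(\<Sum>u\<in>SN N. pmf (P 1) u * eta m u) \<le> (\<integral>u. eta m u \<partial>measure_pmf (P 1))"
    by (rule sum_le_integral_pmf[where B=1]) (auto simp: eta_bounds)
  finally show ?thesis using N m by (intro exI[of _ m] exI[of _ N]) linarith
qed

end

context mk begin

definition good :: "nat \<Rightarrow> bool" where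
  "good z \<longleftrightarrow> (\<forall>e>0. \<exists>n N. 1 - e \<le> th P N n z)"

lemma good1: "good 1"
  unfolding good_def by (auto intro!: exI[of _ 0])

lemma Lw:
  assumes w: "w \<ge> 1" and g: "good w" and e: "e > 0"
  shows "\<exists>n N. 1 - e \<le> (\<Sum>u\<in>SN N. pmf (P w) u * th P N n u)"
proof (cases "w = 1")
  case True then show ?thesis using R1[OF e] by simp
next
  case False
  define e' where "e' = min e (1/2)"
  have e': "e' > 0" "e' \<le> e" "e' \<le> 1/2" using e by (auto simp: e'_def)
  obtain n N where nN: "1 - e' \<le> th P N n w" using g e' unfolding good_def by blast
  have "th P N n w \<le> th P N (Suc n) w" by (rule th_mono_n)
  then have pos: "1 - e' \<le> th P N (Suc n) w" using nN by linarith
  have "w \<in> SN N"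
  proof (rule ccontr)
    assume "w \<notin> SN N" then have "th P N (Suc n) w = 0" using False by simp
    then show False using pos e' by linarith
  qed
  then have "th P N (Suc n) w = (\<Sum>u\<in>SN N. pmf (P w) u * th P N n u)" using False by simp
  then show ?thesis using pos e' by (intro exI[of _ n] exI[of _ N]) linarith
qed

lemma prop_good:
  assumes w: "w \<ge> 1" and g: "good w" and v: "v \<in> set_pmf (P w)"
  shows "good v"
  unfolding good_def
proof (intro allI impI)
  fix e :: real assume e: "e > 0"
  show "\<exists>n N. 1 - e \<le> th P N n v"
  proof (cases "e \<ge> 1")
    case True then show ?thesis using th_bounds[of P 0 0 v] by (intro exI[of _ 0] exI[of _ 0]) linarith
  next
    case False
    define p where "p = pmf (P w) v"
    have p: "0 < p" "p \<le> 1" using v by (auto simp: p_def set_pmf_eq' pmf_le_1)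
    obtain n N where nN: "1 - e * p \<le> (\<Sum>u\<in>SN N. pmf (P w) u * th P N n u)"
      using Lw[OF w g, of "e * p"] e p by auto
    have b: "(\<Sum>u\<in>SN N. pmf (P w) u * th P N n u) \<le> (if v \<in> SN N then p * th P N n v else 0) + (1 - p)"
      unfolding p_def by (rule sum_single_bound) (auto simp: th_bounds)
    show ?thesis
    proof (cases "v \<in> SN N")
      case True
      then have "p * (1 - e) \<le> p * th P N n v" using nN b by (simp add: algebra_simps)
      then have "1 - e \<le> th P N n v" using p by (simp add: mult_le_cancel_left_pos)
      then show ?thesis by blast
    next
      case vF: False
      then have "p \<le> e * p" using nN b by simp
      then have "1 \<le> e" using p by simp
      then show ?thesis using False by simp
    qed
  qed
qed

lemma reach_good:
  "w \<ge> 1 \<Longrightarrow> good w \<Longrightarrow> V P UNIV (indicator {z}) m w > 0 \<Longrightarrow> good z"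
proof (induction m arbitrary: w)
  case 0 then show ?case by (auto simp: indicator_def split: if_splits)
next
  case (Suc m)
  have "(\<integral>u. V P UNIV (indicator {z}) m u \<partial>measure_pmf (P w)) \<noteq> 0" using Suc.prems by simp
  then obtain u where u: "u \<in> set_pmf (P w)" "V P UNIV (indicator {z}) m u \<noteq> 0"
    using integral_pos_ex by blast
  have u0: "V P UNIV (indicator {z}) m u > 0"
    using u(2) V_bounds[of "indicator {z}" P UNIV m u] by (auto simp: indicator_def)
  have u1: "u \<ge> 1" using P_supp[OF Suc.prems(1)] u(1) by auto
  have "good u" by (rule prop_good[OF Suc.prems(1) Suc.prems(2) u(1)])
  then show ?case using Suc.IH[OF u1 _ u0] by blast
qed

lemma irr_V: "x \<ge> 1 \<Longrightarrow> y \<ge> 1 \<Longrightarrow> \<exists>n. V P UNIV (indicator {y}) n x > 0"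
proof -
  assume xy: "x \<ge> 1" "y \<ge> 1"
  obtain n where n: "measure_pmf.prob (chain_path P x n) {xs. xs ! n = y} > 0"
    using irr xy unfolding irreducible_kernel_def by blast
  have e: "{xs. xs ! n = y} = {xs. (\<forall>i\<le>n. xs!i \<in> UNIV) \<and> xs!n \<in> {y}}" by auto
  show ?thesis using n unfolding e chain_path_V by blast
qed

lemma all_good: "z \<ge> 1 \<Longrightarrow> good z"
  using irr_V[of 1 z] reach_good[of 1 z] good1 by auto

lemma EE_small:
  assumes et: "et > 0"
  shows "\<exists>n N. EE n N \<le> et"
proof (cases "et \<ge> 1")
  case True
  have "EE 0 0 \<le> 1" unfolding EE_def using th_bounds pi_nonneg
    by (simp add: SN_def)
  then show ?thesis using True by (intro exI[of _ 0] exI[of _ 0]) linarith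
next
  case False
  define d where "d = et / 2"
  have d: "0 < d" "d < 1/2" using et False by (auto simp: d_def)
  obtain F where F: "finite F" "F \<subseteq> {1..}" "dist (sum \<pi> F) 1 \<le> d"
    using has_sum_finite_approximation[OF pi_hs d(1)] by blast
  have sF: "1 - d \<le> sum \<pi> F" using F(3) by (auto simp: dist_real_def)
  have "\<forall>z\<in>F. \<exists>nN. 1 - d \<le> th P (snd nN) (fst nN) z"
    using all_good F(2) d unfolding good_def by auto
  then obtain f where f: "\<forall>z\<in>F. 1 - d \<le> th P (snd (f z)) (fst (f z)) z" by metis
  define n0 where "n0 = Max (insert 0 (fst ` f ` F))"
  define N0 where "N0 = Max (insert (Suc (Max (insert 0 F))) (snd ` f ` F))"
  have n0: "z \<in> F \<Longrightarrow> fst (f z) \<le> n0" for z unfolding n0_def by (rule Max_ge) (auto simp: F(1))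
  have N0: "z \<in> F \<Longrightarrow> snd (f z) \<le> N0" for z unfolding N0_def by (rule Max_ge) (auto simp: F(1))
  have FS: "F \<subseteq> SN N0"
  proof
    fix z assume z: "z \<in> F"
    have "z \<le> Max (insert 0 F)" using z F(1) by (intro Max_ge) auto
    moreover have "Suc (Max (insert 0 F)) \<le> N0" unfolding N0_def by (rule Max_ge) (auto simp: F(1))
    ultimately show "z \<in> SN N0" using z F(2) by (auto simp: SN_def)
  qed
  have thz: "1 - d \<le> th P N0 n0 z" if z: "z \<in> F" for z
    using f z th_mono_n'[OF n0[OF z], of P "snd (f z)" z] th_mono_N[OF N0[OF z], of P n0 z] by fastforce
  have "(1 - d) * (1 - d) \<le> (1 - d) * sum \<pi> F" using sF d by (intro mult_left_mono) auto
  also have "\<dots> = (\<Sum>z\<in>F. \<pi> z * (1 - d))" by (simp add: sum_distrib_left mult.commute)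
  also have "\<dots> \<le> (\<Sum>z\<in>F. \<pi> z * th P N0 n0 z)"
    using F(2) by (intro sum_mono mult_left_mono thz) (auto simp: pi_nonneg)
  also have "\<dots> \<le> (\<Sum>z\<in>SN N0. \<pi> z * th P N0 n0 z)"
    using FS by (intro sum_mono2) (auto simp: SN_def pi_nonneg th_bounds)
  finally have "(1 - d) * (1 - d) \<le> (\<Sum>z\<in>SN N0. \<pi> z * th P N0 n0 z)" .
  moreover have "1 - et \<le> (1 - d) * (1 - d)" by (simp add: d_def algebra_simps)
  ultimately show ?thesis unfolding EE_def by (intro exI[of _ n0] exI[of _ N0]) linarith
qed

end

context mk begin

lemma P11: "pmf (P 1) 1 > 0"
proof (rule ccontr)
  assume a: "\<not> pmf (P 1) 1 > 0"
  have z: "pmf (P w) 1 = 0" if w: "w \<ge> 1" for w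
  proof -
    have "(\<Sum>u\<in>{1..1}. pmf (P w) u) \<le> (\<Sum>u\<in>{1..1}. pmf (P 1) u)" by (rule cdf_mono) (use w in auto)
    then show ?thesis using a pmf_nonneg[of "P w" "Suc 0"] pmf_nonneg[of "P (Suc 0)" "Suc 0"] by simp
  qed
  have V0: "z \<ge> 2 \<Longrightarrow> V P UNIV (indicator {1}) n z = 0" for n z
  proof (induction n arbitrary: z)
    case 0 then show ?case by simp
  next
    case (Suc n)
    have "(\<integral>u. V P UNIV (indicator {1}) n u \<partial>measure_pmf (P z)) = (\<integral>u. 0 \<partial>measure_pmf (P z))"
    proof (intro integral_cong_AE)
      show "AE u in measure_pmf (P z). V P UNIV (indicator {1}) n u = 0"
      proof (rule AE_pmfI)
        fix u assume u: "u \<in> set_pmf (P z)"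
        have "u \<ge> 1" using P_supp[of z] Suc.prems u by auto
        moreover have "u \<noteq> 1" using u z[of z] Suc.prems by (auto simp: set_pmf_eq)
        ultimately show "V P UNIV (indicator {1}) n u = 0" by (intro Suc.IH) auto
      qed
    qed auto
    then show ?case by simp
  qed
  obtain n where "V P UNIV (indicator {1}) n 2 > 0" using irr_V[of 2 1] by auto
  then show False using V0[of 2 n] by simp
qed

lemma V_to_q: "u \<ge> 1 \<Longrightarrow> V P UNIV (indicator {w}) m u > 0 \<Longrightarrow> \<exists>N. q P (SN N) m u w > 0"
proof (induction m arbitrary: u)
  case 0
  then have "u = w" by (auto simp: indicator_def split: if_splits)
  then show ?case using 0 by (intro exI[of _ "Suc u"]) (auto simp: SN_def)
next
  case (Suc m)
  have "(\<integral>v. V P UNIV (indicator {w}) m v \<partial>measure_pmf (P u)) \<noteq> 0" using Suc.prems by simp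
  then obtain v where v: "v \<in> set_pmf (P u)" "V P UNIV (indicator {w}) m v \<noteq> 0"
    using integral_pos_ex by blast
  have v0: "V P UNIV (indicator {w}) m v > 0"
    using v(2) V_bounds[of "indicator {w}" P UNIV m v] by (auto simp: indicator_def)
  have v1: "v \<ge> 1" using P_supp[OF Suc.prems(1)] v(1) by auto
  obtain Nv where Nv: "q P (SN Nv) m v w > 0" using Suc.IH[OF v1 v0] by blast
  define N where "N = max Nv (max (Suc u) (Suc v))"
  have sub: "SN Nv \<subseteq> SN N" by (auto simp: N_def SN_def)
  have uS: "u \<in> SN N" and vS: "v \<in> SN N" using Suc.prems v1 by (auto simp: N_def SN_def)
  have pv: "pmf (P u) v > 0" using v(1) by (simp add: set_pmf_eq')
  have "0 < pmf (P u) v * q P (SN Nv) m v w" using pv Nv by simp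
  also have "\<dots> \<le> pmf (P u) v * q P (SN N) m v w"
    by (intro mult_left_mono q_mono_S sub) auto
  also have "\<dots> \<le> (\<Sum>v'\<in>SN N. pmf (P u) v' * q P (SN N) m v' w)"
    by (rule member_le_sum[where f="\<lambda>v'. pmf (P u) v' * q P (SN N) m v' w"]) (auto simp: vS q_nonneg)
  also have "\<dots> = q P (SN N) (Suc m) u w" using uS by simp
  finally show ?case by blast
qed

lemma reach_q: "u \<ge> 1 \<Longrightarrow> w \<ge> 1 \<Longrightarrow> \<exists>m N. q P (SN N) m u w > 0"
  using irr_V[of u w] V_to_q by blast

lemma selfloop: "1 \<in> SN N \<Longrightarrow> pmf (P 1) 1 ^ k \<le> q P (SN N) k 1 1"
proof (induction k)
  case 0 then show ?case by simp
next
  case (Suc k)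
  have "pmf (P 1) 1 ^ Suc k = pmf (P 1) 1 * pmf (P 1) 1 ^ k" by simp
  also have "\<dots> \<le> pmf (P 1) 1 * q P (SN N) k 1 1" by (intro mult_left_mono Suc) auto
  also have "\<dots> \<le> (\<Sum>v\<in>SN N. pmf (P 1) v * q P (SN N) k v 1)"
    by (rule member_le_sum[where f="\<lambda>v. pmf (P 1) v * q P (SN N) k v 1"]) (use Suc.prems in \<open>auto simp: q_nonneg\<close>)
  also have "\<dots> = q P (SN N) (Suc k) 1 1" using Suc.prems by simp
  finally show ?case .
qed

lemma KC:
  assumes x: "x \<ge> 1"
  shows "\<exists>j N0 c. 0 < c \<and> c \<le> 1 \<and> (\<forall>N\<ge>N0. \<forall>n\<ge>j.
            c * G P N n 1 x \<le> q P (SN N) n 1 x \<and> 0 < q P (SN N) n 1 x)"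
proof -
  have "\<forall>u\<in>{1..x}. \<exists>mN. q P (SN (snd mN)) (fst mN) u 1 > 0" using reach_q by fastforce
  then obtain f where f: "\<forall>u\<in>{1..x}. q P (SN (snd (f u))) (fst (f u)) u 1 > 0" by metis
  obtain l N' where l: "q P (SN N') l 1 x > 0" using reach_q[OF _ x, of 1] by auto
  define J where "J = Max (insert 0 (fst ` f ` {1..x}))"
  define N0 where "N0 = Max (insert (max (Suc x) (max N' 2)) (snd ` f ` {1..x}))"
  define j where "j = J + l"
  have J: "u \<in> {1..x} \<Longrightarrow> fst (f u) \<le> J" for u unfolding J_def by (rule Max_ge) auto
  have Nf: "u \<in> {1..x} \<Longrightarrow> snd (f u) \<le> N0" for u unfolding N0_def by (rule Max_ge) auto
  have N0b: "max (Suc x) (max N' 2) \<le> N0" unfolding N0_def by (rule Max_ge) auto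
  have subN: "N \<le> N' \<Longrightarrow> SN N \<subseteq> SN N'" for N N' by (auto simp: SN_def)
  define cu where "cu u = q P (SN N0) j u x" for u
  have cu_pos: "cu u > 0" if u: "u \<in> {1..x}" for u
  proof -
    let ?m = "fst (f u)"
    have 1: "1 \<in> SN N0" using N0b by (auto simp: SN_def)
    have a: "0 < q P (SN N0) ?m u 1"
      using f u q_mono_S[OF subN[OF Nf[OF u]], of P ?m u 1] by fastforce
    have b: "0 < q P (SN N0) (J - ?m) 1 1"
      using selfloop[OF 1, of "J - ?m"] P11 by (smt (verit) zero_less_power)
    have c: "0 < q P (SN N0) l 1 x"
      using l q_mono_S[OF subN, of N' N0 P l 1 x] N0b by fastforce
    have "0 < q P (SN N0) ?m u 1 * q P (SN N0) (J - ?m) 1 1" using a b by simp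
    also have "\<dots> \<le> q P (SN N0) (?m + (J - ?m)) u 1" by (rule q_comp) (use 1 in auto)
    finally have d: "0 < q P (SN N0) J u 1" using J[OF u] by simp
    have "0 < q P (SN N0) J u 1 * q P (SN N0) l 1 x" using d c by simp
    also have "\<dots> \<le> q P (SN N0) (J + l) u x" by (rule q_comp) (use 1 in auto)
    finally show ?thesis by (simp add: cu_def j_def)
  qed
  define c where "c = min 1 (Min (cu ` {1..x}))"
  have c: "0 < c" "c \<le> 1" using cu_pos x by (auto simp: c_def)
  have cle: "c \<le> cu u" if "u \<in> {1..x}" for u
    using that unfolding c_def by (meson Min_le finite_atLeastAtMost finite_imageI image_eqI min.coboundedI2)
  have main: "c * G P N n 1 x \<le> q P (SN N) n 1 x \<and> 0 < q P (SN N) n 1 x" if N: "N \<ge> N0" and n: "n \<ge> j" for N n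
  proof -
    have 1: "1 \<in> SN N" using N N0b by (auto simp: SN_def)
    have "c * G P N n 1 x \<le> c * G P N (n - j) 1 x"
      using c by (intro mult_left_mono G_dec_time) auto
    also have "\<dots> = (\<Sum>u\<in>{u\<in>SN N. u \<le> x}. q P (SN N) (n - j) 1 u * c)"
      by (simp add: G_def sum_distrib_left mult.commute)
    also have "\<dots> \<le> (\<Sum>u\<in>{u\<in>SN N. u \<le> x}. q P (SN N) (n - j) 1 u * q P (SN N) j u x)"
    proof (intro sum_mono mult_left_mono)
      fix u assume u: "u \<in> {u\<in>SN N. u \<le> x}"
      then have u': "u \<in> {1..x}" by (auto simp: SN_def)
      have "c \<le> cu u" by (rule cle[OF u'])
      also have "cu u \<le> q P (SN N) j u x" unfolding cu_def by (intro q_mono_S subN N) simp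
      finally show "c \<le> q P (SN N) j u x" .
    qed (auto simp: q_nonneg)
    also have "\<dots> \<le> (\<Sum>u\<in>SN N. q P (SN N) (n - j) 1 u * q P (SN N) j u x)"
      by (intro sum_mono2) (auto intro: mult_nonneg_nonneg q_nonneg)
    also have "\<dots> = q P (SN N) (n - j + j) 1 x" by (rule q_CK[symmetric]) simp
    also have "\<dots> = q P (SN N) n 1 x" using n by simp
    finally have A: "c * G P N n 1 x \<le> q P (SN N) n 1 x" .
    have "q P (SN N) n 1 1 \<le> G P N n 1 x"
      unfolding G_def
      by (rule member_le_sum[where f="\<lambda>u. q P (SN N) n 1 u"]) (use 1 x in \<open>auto simp: q_nonneg\<close>)
    moreover have "0 < q P (SN N) n 1 1"
      using selfloop[OF 1, of n] P11 by (smt (verit) zero_less_power)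
    ultimately have "0 < c * G P N n 1 x" using c by simp
    then show ?thesis using A by simp
  qed
  show ?thesis using c main by blast
qed

end

theorem final:
  fixes P Prev :: "nat \<Rightarrow> nat pmf" and \<pi> :: "nat \<Rightarrow> real"
  assumes "stoch_kernel P"
    and "monotone_kernel P"
    and "irreducible_kernel P"
    and "positive_recurrent P"
    and "stationary_prob P \<pi>"
    and "\<forall>x\<ge>1. \<forall>y\<ge>1. pmf (Prev x) y = \<pi> y * pmf (P y) x / \<pi> x"
  shows "\<forall>x\<ge>1. \<forall>y\<ge>1.
           ((\<lambda>(n, N). cond_prob_not_exited Prev x n N y) \<longlongrightarrow> \<pi> y)
             (sequentially \<times>\<^sub>F sequentially)"
proof (intro allI impI)
  interpret mk P Prev \<pi> by (unfold_locales) (use assms in auto)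
  fix x y :: nat assume x: "x \<ge> 1" and y: "y \<ge> 1"
  obtain j N0 c where c: "0 < c" "c \<le> 1"
    and KC': "\<And>N n. N \<ge> N0 \<Longrightarrow> n \<ge> j \<Longrightarrow> c * G P N n 1 x \<le> q P (SN N) n 1 x \<and> 0 < q P (SN N) n 1 x"
    using KC[OF x] by blast
  have py: "0 < \<pi> y" by (rule pi_pos[OF y])
  show "((\<lambda>(n, N). cond_prob_not_exited Prev x n N y) \<longlongrightarrow> \<pi> y) (sequentially \<times>\<^sub>F sequentially)"
    unfolding tendsto_iff
  proof (intro allI impI)
    fix e :: real assume e: "e > 0"
    define et where "et = min (c * \<pi> y / 2) (c * e / 8)"
    have et: "et > 0" using c py e by (simp add: et_def)
    obtain n1 N1 where n1: "EE n1 N1 \<le> et" using EE_small[OF et] by blast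
    define M where "M = max (max j n1) (max N0 (max N1 (max (Suc x) (Suc y))))"
    show "\<forall>\<^sub>F z in sequentially \<times>\<^sub>F sequentially.
            dist ((\<lambda>(n, N). cond_prob_not_exited Prev x n N y) z) (\<pi> y) < e"
      unfolding eventually_prod_sequentially
    proof (intro exI[of _ M] allI impI)
      fix N n assume N: "N \<ge> M" and n: "n \<ge> M"
      have xS: "x \<in> SN N" and yS: "y \<in> SN N" using N x y by (auto simp: M_def SN_def)
      have K: "c * G P N n 1 x \<le> q P (SN N) n 1 x" "0 < q P (SN N) n 1 x"
        using KC'[of N n] N n by (auto simp: M_def)
      have EEb: "EE n N \<le> et" using EE_mono[of n1 n N1 N] N n n1 by (auto simp: M_def)
      have E1: "EE n N \<le> c * \<pi> y / 2" using EEb by (simp add: et_def)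
      have "\<bar>cond_prob_not_exited Prev x n N y - \<pi> y\<bar> \<le> 4 * EE n N / c"
        by (rule main_est[OF xS yS c K E1])
      also have "\<dots> \<le> 4 * (c * e / 8) / c"
        using EEb c by (intro divide_right_mono mult_left_mono) (auto simp: et_def)
      also have "\<dots> = e / 2" using c by simp
      finally show "dist ((\<lambda>(n, N). cond_prob_not_exited Prev x n N y) (n, N)) (\<pi> y) < e"
        using e by (simp add: dist_real_def)
    qed
  qed
qed


theorem proposition2:
  fixes P Prev :: "nat \<Rightarrow> nat pmf" and \<pi> :: "nat \<Rightarrow> real"
  assumes "stoch_kernel P"
    and "monotone_kernel P"
    and "irreducible_kernel P"
    and "positive_recurrent P"
    and "stationary_prob P \<pi>"
    and "\<forall>x\<ge>1. \<forall>y\<ge>1. pmf (Prev x) y = \<pi> y * pmf (P y) x / \<pi> x"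
  shows "\<forall>x\<ge>1. \<forall>y\<ge>1.
           ((\<lambda>(n, N). cond_prob_not_exited Prev x n N y) \<longlongrightarrow> \<pi> y)
             (sequentially \<times>\<^sub>F sequentially)"
  using assms by (rule final)

end
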